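(* Let $\mathcal{R}^{rsc}$ be a rich single-crossing domain, let $\{R^n\}_{n\ge1}\subseteq\mathcal{R}^{rsc}$ converge to $R\in\mathcal{R}^{rsc}$ in the order topology, and let $(t^{1n},q^{1n})\to(t^1,q^1)$ and $(t^{2n},q^{2n})\to(t^2,q^2)$ be convergent sequences in $\mathbb{Z}$ (Euclidean topology). If $(t^{1n},q^{1n})\,I^n\,(t^{2n},q^{2n})$ for all $n$, where $I^n$ is the indifference relation of $R^n$, then $(t^1,q^1)\,I\,(t^2,q^2)$, where $I$ is the indifference relation of $R$.
   Context: $\mathbb{Z}=[0,\infty)\times[0,1]$. A classical preference is a complete transitive relation $R$ on $\mathbb{Z}$ (strict part $P$, indifference $I$) such that: for all $q$, $t''>t'$ implies $(t',q)P(t'',q)$; for all $t$, $q''>q'$ implies $(t,q'')P(t,q')$; upper and lower contour sets $\{x:xRz\},\{x:zRx\}$ are closed. Two distinct classical preferences satisfy single-crossing if any indifference set of one meets any indifference set of the other in at most one point. A rich single-crossing domain $\mathcal{R}^{rsc}$ is a set of pairwise single-crossing classical preferences such that for all $(t',q'),(t'',q'')$ with $t'<t''$, $q'<q''$ some member is indifferent between them. Writing $(t',q')<(t'',q'')$ for $t'<t''$, $q'<q''$ and $\square(z)=\{x:x=z\text{ or }x<z\}$, for distinct $R',R''$ in the domain, $R'\prec R''$ means $\square(z)\cap\{x:xR''z\}\subseteq\square(z)\cap\{x:xR'z\}$ for every $z$. $\prec$ is a linear order, and $\mathcal{R}^{rsc}$ carries the associated order topology. *)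

theory Defs
  imports "HOL-Analysis.Analysis"
begin

type_synonym point = "real \<times> real"
type_synonym pref = "point \<Rightarrow> point \<Rightarrow> bool"

definition ZZ :: "point set" where
  "ZZ = {(t, q). 0 \<le> t \<and> 0 \<le> q \<and> q \<le> 1}"

definition strict_pref :: "pref \<Rightarrow> point \<Rightarrow> point \<Rightarrow> bool" where
  "strict_pref R x y \<longleftrightarrow> R x y \<and> \<not> R y x"

definition indiff :: "pref \<Rightarrow> point \<Rightarrow> point \<Rightarrow> bool" where
  "indiff R x y \<longleftrightarrow> R x y \<and> R y x"

definition classical :: "pref \<Rightarrow> bool" where
  "classical R \<longleftrightarrow>
     (\<forall>x y. R x y \<longrightarrow> x \<in> ZZ \<and> y \<in> ZZ) \<and>
     (\<forall>x\<in>ZZ. \<forall>y\<in>ZZ. R x y \<or> R y x) \<and>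
     (\<forall>x\<in>ZZ. \<forall>y\<in>ZZ. \<forall>z\<in>ZZ. R x y \<longrightarrow> R y z \<longrightarrow> R x z) \<and>
     (\<forall>q t' t''. (t', q) \<in> ZZ \<longrightarrow> (t'', q) \<in> ZZ \<longrightarrow> t'' > t' \<longrightarrow>
        strict_pref R (t', q) (t'', q)) \<and>
     (\<forall>t q' q''. (t, q') \<in> ZZ \<longrightarrow> (t, q'') \<in> ZZ \<longrightarrow> q'' > q' \<longrightarrow>
        strict_pref R (t, q'') (t, q')) \<and>
     (\<forall>z\<in>ZZ. closedin (top_of_set ZZ) {x\<in>ZZ. R x z} \<and>
              closedin (top_of_set ZZ) {x\<in>ZZ. R z x})"

definition indiff_set :: "pref \<Rightarrow> point \<Rightarrow> point set" where
  "indiff_set R z = {x\<in>ZZ. indiff R x z}"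

definition single_crossing :: "pref \<Rightarrow> pref \<Rightarrow> bool" where
  "single_crossing R' R'' \<longleftrightarrow>
     (\<forall>z'\<in>ZZ. \<forall>z''\<in>ZZ. \<forall>x y.
        x \<in> indiff_set R' z' \<inter> indiff_set R'' z'' \<longrightarrow>
        y \<in> indiff_set R' z' \<inter> indiff_set R'' z'' \<longrightarrow> x = y)"

definition point_less :: "point \<Rightarrow> point \<Rightarrow> bool" where
  "point_less x y \<longleftrightarrow> fst x < fst y \<and> snd x < snd y"

definition rich_single_crossing :: "pref set \<Rightarrow> bool" where
  "rich_single_crossing D \<longleftrightarrow>
     (\<forall>R\<in>D. classical R) \<and>
     (\<forall>R'\<in>D. \<forall>R''\<in>D. R' \<noteq> R'' \<longrightarrow> single_crossing R' R'') \<and>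
     (\<forall>x\<in>ZZ. \<forall>y\<in>ZZ. point_less x y \<longrightarrow> (\<exists>R\<in>D. indiff R x y))"

definition box_below :: "point \<Rightarrow> point set" where
  "box_below z = {x\<in>ZZ. x = z \<or> point_less x z}"

definition pref_prec :: "pref \<Rightarrow> pref \<Rightarrow> bool" where
  "pref_prec R' R'' \<longleftrightarrow> R' \<noteq> R'' \<and>
     (\<forall>z\<in>ZZ. box_below z \<inter> {x\<in>ZZ. R'' x z} \<subseteq> box_below z \<inter> {x\<in>ZZ. R' x z})"

definition order_top :: "pref set \<Rightarrow> pref topology" where
  "order_top D = subtopology
     (topology (generate_topology
        ({{R\<in>D. pref_prec R A} | A. A \<in> D} \<union> {{R\<in>D. pref_prec A R} | A. A \<in> D}))) D"

end

theory Submission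
  imports Defs
begin

lemma cl_in: "classical S \<Longrightarrow> S x y \<Longrightarrow> x \<in> ZZ \<and> y \<in> ZZ"
  unfolding classical_def by blast
lemma cl_tot: "classical S \<Longrightarrow> x \<in> ZZ \<Longrightarrow> y \<in> ZZ \<Longrightarrow> \<not> S x y \<Longrightarrow> S y x"
  unfolding classical_def by blast
lemma cl_refl: "classical S \<Longrightarrow> x \<in> ZZ \<Longrightarrow> S x x"
  unfolding classical_def by blast
lemma cl_trans: "classical S \<Longrightarrow> S x y \<Longrightarrow> S y z \<Longrightarrow> S x z"
  unfolding classical_def by blast
lemma cl_closed1: "classical S \<Longrightarrow> z \<in> ZZ \<Longrightarrow> closedin (top_of_set ZZ) {x\<in>ZZ. S x z}"
  unfolding classical_def by blast
lemma cl_closed2: "classical S \<Longrightarrow> z \<in> ZZ \<Longrightarrow> closedin (top_of_set ZZ) {x\<in>ZZ. S z x}"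
  unfolding classical_def by blast

lemma ZZ_iff: "(t,q) \<in> ZZ \<longleftrightarrow> 0 \<le> t \<and> 0 \<le> q \<and> q \<le> 1"
  unfolding ZZ_def by auto
lemma ZZ_iff': "x \<in> ZZ \<longleftrightarrow> 0 \<le> fst x \<and> 0 \<le> snd x \<and> snd x \<le> 1"
  unfolding ZZ_def by (cases x) auto

lemma dom_weak:
  assumes S: "classical S" and u: "u \<in> ZZ" and v: "v \<in> ZZ"
    and "fst u \<le> fst v" "snd v \<le> snd u"
  shows "S u v"
proof -
  obtain t q t' q' where uv: "u = (t,q)" "v = (t',q')" by (cases u, cases v) auto
  have m: "(t,q') \<in> ZZ" using u v uv assms(4,5) by (auto simp: ZZ_iff)
  have 1: "S (t,q) (t,q')"
  proof (cases "q' < q")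
    case True thus ?thesis using S m u uv unfolding classical_def strict_pref_def by blast
  next
    case False hence "q = q'" using assms uv by auto
    thus ?thesis using cl_refl[OF S m] by simp
  qed
  have 2: "S (t,q') (t',q')"
  proof (cases "t < t'")
    case True thus ?thesis using S m v uv unfolding classical_def strict_pref_def by blast
  next
    case False hence "t = t'" using assms uv by auto
    thus ?thesis using cl_refl[OF S m] by simp
  qed
  show ?thesis using cl_trans[OF S 1 2] uv by simp
qed

lemma dom_strict:
  assumes S: "classical S" and u: "u \<in> ZZ" and v: "v \<in> ZZ"
    and "fst u \<le> fst v" "snd v \<le> snd u" "u \<noteq> v"
  shows "\<not> S v u"
proof -
  obtain t q t' q' where uv: "u = (t,q)" "v = (t',q')" by (cases u, cases v) auto
  have m: "(t,q') \<in> ZZ" using u v uv assms(4,5) by (auto simp: ZZ_iff)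
  show ?thesis
  proof (cases "q' < q")
    case True
    hence 1: "\<not> S (t,q') (t,q)" using S m u uv unfolding classical_def strict_pref_def by blast
    have "S (t,q') (t',q')" using dom_weak[OF S m v] assms uv by auto
    thus ?thesis using 1 uv cl_trans[OF S] by blast
  next
    case False hence "q = q'" "t < t'" using assms uv by auto
    hence "\<not> S (t',q') (t,q')" using S m v uv unfolding classical_def strict_pref_def by blast
    thus ?thesis using uv \<open>q = q'\<close> by simp
  qed
qed

lemma open_worse: "classical S \<Longrightarrow> z \<in> ZZ \<Longrightarrow> openin (top_of_set ZZ) {x\<in>ZZ. \<not> S x z}"
proof -
  assume a: "classical S" "z \<in> ZZ"
  have "{x\<in>ZZ. \<not> S x z} = ZZ - {x\<in>ZZ. S x z}" by auto
  thus ?thesis using cl_closed1[OF a] by (simp add: openin_diff)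
qed
lemma open_better: "classical S \<Longrightarrow> z \<in> ZZ \<Longrightarrow> openin (top_of_set ZZ) {x\<in>ZZ. \<not> S z x}"
proof -
  assume a: "classical S" "z \<in> ZZ"
  have "{x\<in>ZZ. \<not> S z x} = ZZ - {x\<in>ZZ. S z x}" by auto
  thus ?thesis using cl_closed2[OF a] by (simp add: openin_diff)
qed

lemma ZZ_closed: "closed ZZ"
proof -
  have "ZZ = {x. 0 \<le> fst x} \<inter> {x. 0 \<le> snd x} \<inter> {x. snd x \<le> 1}"
    by (auto simp: ZZ_iff')
  moreover have "closed ({x::point. 0 \<le> fst x} \<inter> {x. 0 \<le> snd x} \<inter> {x. snd x \<le> 1})"
    by (intro closed_Int closed_Collect_le continuous_intros)
  ultimately show ?thesis by simp
qed

lemma ZZ_convex: "convex ZZ"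
  unfolding convex_def ZZ_iff'
  by (auto simp: ZZ_iff intro!: add_nonneg_nonneg mult_nonneg_nonneg convex_bound_le)

lemma ZZ_connected: "connected ZZ" by (simp add: ZZ_convex convex_connected)

lemma ball_in:
  assumes "openin (top_of_set ZZ) U" "z \<in> U"
  obtains e where "e > 0" "\<And>x. x \<in> ZZ \<Longrightarrow> dist x z < e \<Longrightarrow> x \<in> U"
  using assms unfolding openin_euclidean_subtopology_iff by blast

lemma ev_in:
  assumes "openin (top_of_set ZZ) U" "z \<in> U" "f \<longlonglongrightarrow> z" "\<And>n. f n \<in> ZZ"
  shows "eventually (\<lambda>n. f n \<in> U) sequentially"
proof -
  obtain e where e: "e > 0" "\<And>x. x \<in> ZZ \<Longrightarrow> dist x z < e \<Longrightarrow> x \<in> U"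
    using ball_in[OF assms(1,2)] by blast
  have "eventually (\<lambda>n. dist (f n) z < e) sequentially" using assms(3) e(1) by (rule tendstoD)
  thus ?thesis by eventually_elim (use e assms(4) in auto)
qed

lemma dist_pair_le: "dist (a::real, b::real) (c, d) \<le> \<bar>a - c\<bar> + \<bar>b - d\<bar>"
  unfolding dist_Pair_Pair dist_real_def
  using sqrt_sum_squares_le_sum_abs[of "\<bar>a-c\<bar>" "\<bar>b-d\<bar>"] by simp

lemma intermediate:
  assumes S: "classical S" and u: "u \<in> ZZ" and v: "v \<in> ZZ" and nuv: "\<not> S u v"
  shows "\<exists>w\<in>ZZ. \<not> S w v \<and> \<not> S u w"
proof (rule ccontr)
  assume "\<not> ?thesis"
  hence cov: "\<forall>w\<in>ZZ. S w v \<or> S u w" by blast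
  let ?E1 = "{w\<in>ZZ. S w v}" and ?E2 = "{w\<in>ZZ. S u w}"
  have "closedin (top_of_set ZZ) ?E1" by (rule cl_closed1[OF S v])
  moreover have "closedin (top_of_set ZZ) ?E2" by (rule cl_closed2[OF S u])
  moreover have "ZZ \<subseteq> ?E1 \<union> ?E2" using cov by blast
  moreover have "?E1 \<inter> ?E2 = {}" using nuv cl_trans[OF S] by blast
  moreover have "?E1 \<noteq> {}" using cl_refl[OF S v] v by blast
  moreover have "?E2 \<noteq> {}" using cl_refl[OF S u] u by blast
  ultimately show False using ZZ_connected unfolding connected_closedin by blast
qed

lemma graph_closed:
  assumes S: "classical S"
  shows "closedin (top_of_set (ZZ \<times> ZZ)) {p. S (fst p) (snd p)}"
proof -
  have sub: "{p. S (fst p) (snd p)} \<subseteq> ZZ \<times> ZZ" using cl_in[OF S] by auto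
  have "openin (top_of_set (ZZ \<times> ZZ)) ((ZZ \<times> ZZ) - {p. S (fst p) (snd p)})"
  proof (subst openin_subopen, intro ballI)
    fix p assume p: "p \<in> (ZZ \<times> ZZ) - {p. S (fst p) (snd p)}"
    obtain u v where uv: "p = (u,v)" by (cases p)
    have u: "u \<in> ZZ" and v: "v \<in> ZZ" and n: "\<not> S u v" using p uv by auto
    obtain w where w: "w \<in> ZZ" "\<not> S w v" "\<not> S u w" using intermediate[OF S u v n] by blast
    let ?T = "{x\<in>ZZ. \<not> S x w} \<times> {y\<in>ZZ. \<not> S w y}"
    have "openin (top_of_set (ZZ \<times> ZZ)) ?T"
      by (intro openin_Times open_worse open_better S w)
    moreover have "p \<in> ?T" using uv u v w by auto
    moreover have "?T \<subseteq> (ZZ \<times> ZZ) - {p. S (fst p) (snd p)}"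
    proof
      fix r assume r: "r \<in> ?T"
      obtain x y where xy: "r = (x,y)" by (cases r)
      have xy2: "x \<in> ZZ" "y \<in> ZZ" "\<not> S x w" "\<not> S w y" using r xy by auto
      have yw: "S y w" by (rule cl_tot[OF S w(1) xy2(2) xy2(4)])
      have "\<not> S x y"
      proof
        assume "S x y"
        hence "S x w" by (rule cl_trans[OF S _ yw])
        thus False using xy2(3) by simp
      qed
      thus "r \<in> (ZZ \<times> ZZ) - {p. S (fst p) (snd p)}" using xy r by auto
    qed
    ultimately show "\<exists>T. openin (top_of_set (ZZ \<times> ZZ)) T \<and> p \<in> T \<and> T \<subseteq> (ZZ \<times> ZZ) - {p. S (fst p) (snd p)}"
      by blast
  qed
  thus ?thesis unfolding closedin_def using sub by simp
qed

lemma ivt_pref: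
  fixes a b :: real and g :: "real \<Rightarrow> point"
  assumes S: "classical S" and v: "v \<in> ZZ" and ab: "a \<le> b"
    and g: "continuous_on {a..b} g" "g ` {a..b} \<subseteq> ZZ"
    and ends: "(S (g a) v \<and> S v (g b)) \<or> (S v (g a) \<and> S (g b) v)"
  shows "\<exists>s\<in>{a..b}. S (g s) v \<and> S v (g s)"
proof (rule ccontr)
  assume nt: "\<not> ?thesis"
  define E1 where "E1 = {a..b} \<inter> g -` {x\<in>ZZ. S x v}"
  define E2 where "E2 = {a..b} \<inter> g -` {x\<in>ZZ. S v x}"
  have c1: "closedin (top_of_set {a..b}) E1" unfolding E1_def
    by (rule continuous_closedin_preimage_gen[OF g(1) _ cl_closed1[OF S v]]) (use g(2) in auto)
  have c2: "closedin (top_of_set {a..b}) E2" unfolding E2_def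
    by (rule continuous_closedin_preimage_gen[OF g(1) _ cl_closed2[OF S v]]) (use g(2) in auto)
  have c3: "{a..b} \<subseteq> E1 \<union> E2"
  proof
    fix s assume s: "s \<in> {a..b}"
    hence gs: "g s \<in> ZZ" using g(2) by blast
    have "S (g s) v \<or> S v (g s)" using cl_tot[OF S gs v] by blast
    thus "s \<in> E1 \<union> E2" using gs s unfolding E1_def E2_def by auto
  qed
  have c4: "E1 \<inter> E2 = {}" using nt unfolding E1_def E2_def by auto
  have aa: "a \<in> {a..b}" "b \<in> {a..b}" using ab by auto
  hence gab: "g a \<in> ZZ" "g b \<in> ZZ" using g(2) by auto
  have c5: "E1 \<noteq> {} \<and> E2 \<noteq> {}"
  proof (cases "S (g a) v \<and> S v (g b)")
    case True
    hence "a \<in> E1" "b \<in> E2" using aa gab unfolding E1_def E2_def by auto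
    thus ?thesis by auto
  next
    case False
    hence "S v (g a) \<and> S (g b) v" using ends by blast
    hence "b \<in> E1" "a \<in> E2" using aa gab unfolding E1_def E2_def by auto
    thus ?thesis by auto
  qed
  have "\<not> connected {a..b}"
    unfolding connected_closedin
    apply (rule notI, erule notE)
    apply (rule exI[of _ E1], rule exI[of _ E2])
    using c1 c2 c3 c4 c5 by simp
  thus False by simp
qed

definition gam :: "point \<times> point \<Rightarrow> real \<Rightarrow> point" where
  "gam p s = (fst (snd p) - max 0 (s - 1) * (fst (snd p) - fst (fst p)),
              snd (fst p) + min s 1 * (snd (snd p) - snd (fst p)))"

definition Dl :: "(point \<times> point) set" where
  "Dl = {p. fst p \<in> ZZ \<and> snd p \<in> ZZ \<and> point_less (fst p) (snd p)}"

lemma Dl_D: "p \<in> Dl \<Longrightarrow> fst p \<in> ZZ \<and> snd p \<in> ZZ \<and> fst (fst p) < fst (snd p) \<and> snd (fst p) < snd (snd p)"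
  unfolding Dl_def point_less_def by auto

lemma conv_between: "0 \<le> (m::real) \<Longrightarrow> m \<le> 1 \<Longrightarrow> a \<le> c \<Longrightarrow> a \<le> c - m*(c-a) \<and> c - m*(c - a) \<le> c"
proof -
  assume h: "0 \<le> m" "m \<le> 1" "a \<le> c"
  have "m*(c-a) \<le> c - a" using h by (simp add: mult_left_le_one_le)
  moreover have "0 \<le> m*(c-a)" using h by simp
  ultimately show ?thesis by linarith
qed

lemma gam_ZZ: "p \<in> Dl \<Longrightarrow> s \<in> {0..2} \<Longrightarrow> gam p s \<in> ZZ"
proof -
  assume p: "p \<in> Dl" and s: "s \<in> {0..2}"
  note d = Dl_D[OF p]
  have m: "0 \<le> max 0 (s-1)" "max 0 (s-1) \<le> 1" "0 \<le> min s 1" "min s 1 \<le> 1" using s by auto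
  have 1: "fst (fst p) \<le> fst (snd p) - max 0 (s - 1) * (fst (snd p) - fst (fst p))"
    using conv_between[OF m(1,2), of "fst (fst p)" "fst (snd p)"] d by linarith
  have 2: "snd (fst p) + min s 1 * (snd (snd p) - snd (fst p)) \<le> snd (snd p)"
    using conv_between[OF m(3,4), of "snd (fst p)" "snd (snd p)"] d by (simp add: algebra_simps)
  have 3: "snd (fst p) \<le> snd (fst p) + min s 1 * (snd (snd p) - snd (fst p))"
    using m d by simp
  show ?thesis unfolding gam_def ZZ_iff using 1 2 3 d by (auto simp: ZZ_iff')
qed

lemma gam_1: "gam p 1 = snd p" unfolding gam_def by simp
lemma gam_0: "gam p 0 = (fst (snd p), snd (fst p))" unfolding gam_def by simp
lemma gam_2: "gam p 2 = (fst (fst p), snd (snd p))" unfolding gam_def by simp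

lemma gam_le:
  assumes p: "p \<in> Dl" and s: "s \<le> s'"
  shows "fst (gam p s') \<le> fst (gam p s) \<and> snd (gam p s) \<le> snd (gam p s')"
proof -
  note d = Dl_D[OF p]
  have "max 0 (s-1) * (fst (snd p) - fst (fst p)) \<le> max 0 (s'-1) * (fst (snd p) - fst (fst p))"
    using d s by (intro mult_right_mono) auto
  moreover have "min s 1 * (snd (snd p) - snd (fst p)) \<le> min s' 1 * (snd (snd p) - snd (fst p))"
    using d s by (intro mult_right_mono) auto
  ultimately show ?thesis unfolding gam_def by simp
qed

lemma gam_neq:
  assumes p: "p \<in> Dl" and s: "s < s'"
  shows "gam p s \<noteq> gam p s'"
proof
  assume eq: "gam p s = gam p s'"
  note d = Dl_D[OF p]
  show False
  proof (cases "s < 1")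
    case True
    have "min s 1 < min s' 1" using True s by auto
    hence "min s 1 * (snd (snd p) - snd (fst p)) < min s' 1 * (snd (snd p) - snd (fst p))"
      using d by (intro mult_strict_right_mono) auto
    moreover have "snd (gam p s) = snd (gam p s')" using eq by simp
    hence "min s 1 * (snd (snd p) - snd (fst p)) = min s' 1 * (snd (snd p) - snd (fst p))"
      unfolding gam_def by simp
    ultimately show False by simp
  next
    case False
    have "max 0 (s-1) < max 0 (s'-1)" using False s by auto
    hence "max 0 (s-1) * (fst (snd p) - fst (fst p)) < max 0 (s'-1) * (fst (snd p) - fst (fst p))"
      using d by (intro mult_strict_right_mono) auto
    moreover have "fst (gam p s) = fst (gam p s')" using eq by simp
    hence "max 0 (s-1) * (fst (snd p) - fst (fst p)) = max 0 (s'-1) * (fst (snd p) - fst (fst p))"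
      unfolding gam_def by simp
    ultimately show False by simp
  qed
qed

lemma gam_ne_fst:
  assumes p: "p \<in> Dl" and s: "s \<in> {0..2}"
  shows "gam p s \<noteq> fst p"
proof
  assume eq: "gam p s = fst p"
  note d = Dl_D[OF p]
  have "min s 1 * (snd (snd p) - snd (fst p)) = 0" using eq unfolding gam_def
    by (metis add_cancel_left_right snd_conv)
  hence "min s 1 = 0" using d by simp
  hence "s = 0" using s by (auto simp: min_def split: if_splits)
  hence "gam p s = (fst (snd p), snd (fst p))" by (simp add: gam_0)
  hence "fst p = (fst (snd p), snd (fst p))" using eq by simp
  hence "fst (fst p) = fst (snd p)" by (metis fst_conv)
  thus False using d by linarith
qed

lemma gam_weak:
  assumes S: "classical S" and p: "p \<in> Dl" and s: "s \<in> {0..2}" "s' \<in> {0..2}" "s \<le> s'"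
  shows "S (gam p s') (gam p s)"
  using dom_weak[OF S gam_ZZ[OF p s(2)] gam_ZZ[OF p s(1)]] gam_le[OF p s(3)] by simp

lemma gam_strict:
  assumes S: "classical S" and p: "p \<in> Dl" and s: "s \<in> {0..2}" "s' \<in> {0..2}" "s < s'"
  shows "\<not> S (gam p s) (gam p s')"
  using dom_strict[OF S gam_ZZ[OF p s(2)] gam_ZZ[OF p s(1)]] gam_le[OF p, of s s'] gam_neq[OF p s(3)] s(3)
  by simp

lemma gam_cont_s: "continuous_on A (gam p)"
  unfolding gam_def by (intro continuous_intros)

lemma gam_cont_p: "continuous_on A (\<lambda>p. gam p s)"
  unfolding gam_def by (intro continuous_intros)

lemma Dl_convex: "convex Dl"
proof (rule convexI)
  fix p p' :: "point \<times> point" and u v :: real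
  assume p: "p \<in> Dl" "p' \<in> Dl" and uv: "0 \<le> u" "0 \<le> v" "u + v = 1"
  obtain a b c d where pe: "p = ((a,b),(c,d))" by (metis prod.collapse)
  obtain aa ba ca da where pe': "p' = ((aa,ba),(ca,da))" by (metis prod.collapse)
  have h: "a < c" "b < d" "aa < ca" "ba < da" using Dl_D[OF p(1)] Dl_D[OF p(2)] pe pe' by auto
  have m: "(a,b)\<in>ZZ" "(aa,ba)\<in>ZZ" "(c,d)\<in>ZZ" "(ca,da)\<in>ZZ" using Dl_D[OF p(1)] Dl_D[OF p(2)] pe pe' by auto
  have Z0: "u *\<^sub>R (a,b) + v *\<^sub>R (aa,ba) \<in> ZZ" "u *\<^sub>R (c,d) + v *\<^sub>R (ca,da) \<in> ZZ"
    using convexD[OF ZZ_convex m(1,2) uv] convexD[OF ZZ_convex m(3,4) uv] by auto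
  have lt: "\<And>x y x' y'. (x::real) < y \<Longrightarrow> x' < y' \<Longrightarrow> u * x + v * x' < u * y + v * y'"
  proof -
    fix x y x' y' :: real assume "x < y" "x' < y'"
    show "u * x + v * x' < u * y + v * y'"
    proof (cases "u = 0")
      case True thus ?thesis using uv \<open>x' < y'\<close> by simp
    next
      case False hence "u > 0" using uv by simp
      hence "u * x < u * y" using \<open>x < y\<close> by simp
      moreover have "v * x' \<le> v * y'" using uv \<open>x' < y'\<close> by (simp add: mult_left_mono)
      ultimately show ?thesis by linarith
    qed
  qed
  show "u *\<^sub>R p + v *\<^sub>R p' \<in> Dl"
    using Z0 lt[OF h(1,3)] lt[OF h(2,4)] unfolding pe pe' Dl_def point_less_def by simp
qed

lemma cl_pre:
  assumes S: "classical S" and f: "continuous_on X f" and g: "continuous_on X g"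
    and fz: "\<And>p. p \<in> X \<Longrightarrow> f p \<in> ZZ" and gz: "\<And>p. p \<in> X \<Longrightarrow> g p \<in> ZZ"
  shows "closedin (top_of_set X) {p\<in>X. S (f p) (g p)}"
proof -
  have "{p\<in>X. S (f p) (g p)} = X \<inter> (\<lambda>p. (f p, g p)) -` {q. S (fst q) (snd q)}" by auto
  moreover have "closedin (top_of_set X) (X \<inter> (\<lambda>p. (f p, g p)) -` {q. S (fst q) (snd q)})"
    by (rule continuous_closedin_preimage_gen[OF continuous_on_Pair[OF f g] _ graph_closed[OF S]])
       (use fz gz in auto)
  ultimately show ?thesis by simp
qed

lemma nbhd_s:
  assumes g: "continuous_on {0..2} g" "g ` {0..2} \<subseteq> ZZ" and U: "openin (top_of_set ZZ) U"
    and s0: "s0 \<in> {0..2::real}" "g s0 \<in> U"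
  shows "\<exists>e>0. \<forall>s\<in>{0..2}. dist s s0 < e \<longrightarrow> g s \<in> U"
proof -
  obtain T where T: "open T" "U = ZZ \<inter> T" using U by (auto simp: openin_open)
  have "openin (top_of_set {0..2}) ({0..2} \<inter> g -` T)"
    by (rule continuous_openin_preimage_gen[OF g(1) T(1)])
  moreover have "s0 \<in> {0..2} \<inter> g -` T" using s0 T by auto
  ultimately obtain e where e: "e > 0" "\<forall>s\<in>{0..2}. dist s s0 < e \<longrightarrow> s \<in> {0..2} \<inter> g -` T"
    unfolding openin_euclidean_subtopology_iff by meson
  show ?thesis
  proof (intro exI[of _ e] conjI ballI impI)
    fix s assume "s \<in> {0..2::real}" "dist s s0 < e"
    thus "g s \<in> U" using e g(2) T(2) by auto
  qed (use e in auto)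
qed

lemma orient:
  assumes S: "classical S" and M: "classical M"
    and sc: "\<And>u v. u \<in> ZZ \<Longrightarrow> v \<in> ZZ \<Longrightarrow> S u v \<Longrightarrow> S v u \<Longrightarrow> M u v \<Longrightarrow> M v u \<Longrightarrow> u = v"
    and p1: "(x,z) \<in> Dl" "S x z" "S z x" "M z x"
    and p2: "(x',z') \<in> Dl" "S x' z'" "S z' x'" "M x' z'"
  shows False
proof -
  define Up where "Up = {p\<in>Dl. \<forall>s\<in>{0..2}. S (fst p) (gam p s) \<or> M (gam p s) (fst p)}"
  define Um where "Um = {p\<in>Dl. \<forall>s\<in>{0..2}. M (fst p) (gam p s) \<or> S (gam p s) (fst p)}"
  have fZ: "\<And>p. p\<in>Dl \<Longrightarrow> fst p \<in> ZZ" using Dl_D by blast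
  have cf: "continuous_on Dl fst" by (intro continuous_intros)
  have cUp: "closedin (top_of_set Dl) Up"
  proof -
    have eq: "Up = (\<Inter>s\<in>{0..2}. {p\<in>Dl. S (fst p) (gam p s)} \<union> {p\<in>Dl. M (gam p s) (fst p)})"
    proof (rule set_eqI, rule iffI)
      fix p assume "p \<in> Up" thus "p \<in> (\<Inter>s\<in>{0..2}. {p\<in>Dl. S (fst p) (gam p s)} \<union> {p\<in>Dl. M (gam p s) (fst p)})"
        unfolding Up_def by auto
    next
      fix p assume h: "p \<in> (\<Inter>s\<in>{0..2}. {p\<in>Dl. S (fst p) (gam p s)} \<union> {p\<in>Dl. M (gam p s) (fst p)})"
      have "(0::real) \<in> {0..2}" by simp
      hence "p \<in> Dl" using h by blast
      thus "p \<in> Up" using h unfolding Up_def by blast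
    qed
    have "closedin (top_of_set Dl) ({p\<in>Dl. S (fst p) (gam p s)} \<union> {p\<in>Dl. M (gam p s) (fst p)})"
      if s: "s\<in>{0..2}" for s
      by (intro closedin_Un cl_pre[OF S cf gam_cont_p] cl_pre[OF M gam_cont_p cf] fZ gam_ZZ s)
    thus ?thesis unfolding eq by (intro closedin_INT) auto
  qed
  have cUm: "closedin (top_of_set Dl) Um"
  proof -
    have eq: "Um = (\<Inter>s\<in>{0..2}. {p\<in>Dl. M (fst p) (gam p s)} \<union> {p\<in>Dl. S (gam p s) (fst p)})"
    proof (rule set_eqI, rule iffI)
      fix p assume "p \<in> Um" thus "p \<in> (\<Inter>s\<in>{0..2}. {p\<in>Dl. M (fst p) (gam p s)} \<union> {p\<in>Dl. S (gam p s) (fst p)})"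
        unfolding Um_def by auto
    next
      fix p assume h: "p \<in> (\<Inter>s\<in>{0..2}. {p\<in>Dl. M (fst p) (gam p s)} \<union> {p\<in>Dl. S (gam p s) (fst p)})"
      have "(0::real) \<in> {0..2}" by simp
      hence "p \<in> Dl" using h by blast
      thus "p \<in> Um" using h unfolding Um_def by blast
    qed
    have "closedin (top_of_set Dl) ({p\<in>Dl. M (fst p) (gam p s)} \<union> {p\<in>Dl. S (gam p s) (fst p)})"
      if s: "s\<in>{0..2}" for s
      by (intro closedin_Un cl_pre[OF M cf gam_cont_p] cl_pre[OF S gam_cont_p cf] fZ gam_ZZ s)
    thus ?thesis unfolding eq by (intro closedin_INT) auto
  qed
  have cover: "Dl \<subseteq> Up \<union> Um"
  proof
    fix p assume p: "p \<in> Dl"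
    show "p \<in> Up \<union> Um"
    proof (rule ccontr)
      assume "p \<notin> Up \<union> Um"
      then obtain s1 s2 where s1: "s1 \<in> {0..2}" "\<not> S (fst p) (gam p s1)" "\<not> M (gam p s1) (fst p)"
        and s2: "s2 \<in> {0..2}" "\<not> M (fst p) (gam p s2)" "\<not> S (gam p s2) (fst p)"
        using p unfolding Up_def Um_def by auto
      have xZ: "fst p \<in> ZZ" using fZ[OF p] .
      show False
      proof (cases "s1 \<le> s2")
        case True
        have a: "S (gam p s2) (gam p s1)" by (rule gam_weak[OF S p s1(1) s2(1) True])
        have b: "S (gam p s1) (fst p)" by (rule cl_tot[OF S xZ gam_ZZ[OF p s1(1)] s1(2)])
        have "S (gam p s2) (fst p)" by (rule cl_trans[OF S a b])
        thus False using s2(3) by simp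
      next
        case False
        have a: "M (gam p s1) (gam p s2)" using gam_weak[OF M p s2(1) s1(1)] False by simp
        have b: "M (gam p s2) (fst p)" by (rule cl_tot[OF M xZ gam_ZZ[OF p s2(1)] s2(2)])
        have "M (gam p s1) (fst p)" by (rule cl_trans[OF M a b])
        thus False using s1(3) by simp
      qed
    qed
  qed
  have disj: "Up \<inter> Um = {}"
  proof (rule ccontr)
    assume "Up \<inter> Um \<noteq> {}"
    then obtain p where pu: "p \<in> Up" and pm: "p \<in> Um" by blast
    have p: "p \<in> Dl" using pu unfolding Up_def by auto
    have pu': "\<forall>s\<in>{0..2}. S (fst p) (gam p s) \<or> M (gam p s) (fst p)" using pu unfolding Up_def by auto
    have pm': "\<forall>s\<in>{0..2}. M (fst p) (gam p s) \<or> S (gam p s) (fst p)" using pm unfolding Um_def by auto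
    have gcont: "continuous_on {0..2} (gam p)" by (rule gam_cont_s)
    have gimg: "gam p ` {0..2} \<subseteq> ZZ" using gam_ZZ[OF p] by auto
    have xZ: "fst p \<in> ZZ" using fZ[OF p] .
    note d = Dl_D[OF p]
    have g0: "gam p 0 \<in> ZZ" "gam p 2 \<in> ZZ" using gam_ZZ[OF p] by auto
    have e0: "S (fst p) (gam p 0)" using dom_weak[OF S xZ g0(1)] d by (simp add: gam_0)
    have e2: "S (gam p 2) (fst p)" using dom_weak[OF S g0(2) xZ] d by (simp add: gam_2)
    have ne0: "\<not> S (gam p 0) (fst p)"
      using dom_strict[OF S xZ g0(1)] d gam_ne_fst[OF p, of 0] by (simp add: gam_0)
    have ne2: "\<not> S (fst p) (gam p 2)"
      using dom_strict[OF S g0(2) xZ] d gam_ne_fst[OF p, of 2] by (simp add: gam_2)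
    have "\<exists>s\<in>{0..2}. S (gam p s) (fst p) \<and> S (fst p) (gam p s)"
      by (rule ivt_pref[OF S xZ _ gcont gimg]) (use e0 e2 in auto)
    then obtain s0 where s0: "s0 \<in> {0..2}" "S (gam p s0) (fst p)" "S (fst p) (gam p s0)" by blast
    have s0p: "0 < s0" using s0 ne0 by (cases "s0 = 0") auto
    have s0l: "s0 < 2" using s0 ne2 by (cases "s0 = 2") auto
    have gs0: "gam p s0 \<in> ZZ" using gam_ZZ[OF p s0(1)] .
    have nb: "\<not> (M (gam p s0) (fst p) \<and> M (fst p) (gam p s0))"
    proof
      assume h: "M (gam p s0) (fst p) \<and> M (fst p) (gam p s0)"
      have "gam p s0 = fst p" using sc[OF gs0 xZ s0(2) s0(3)] h by blast
      thus False using gam_ne_fst[OF p s0(1)] by simp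
    qed
    show False
    proof (cases "M (fst p) (gam p s0)")
      case False
      obtain e where e: "e > 0" "\<forall>s\<in>{0..2}. dist s s0 < e \<longrightarrow> gam p s \<in> {w\<in>ZZ. \<not> M (fst p) w}"
        using nbhd_s[OF gcont gimg open_better[OF M xZ] s0(1)] False gs0 by auto
      define s1 where "s1 = s0 - min (e/2) (s0/2)"
      have s1: "s1 \<in> {0..2}" "dist s1 s0 < e" "s1 < s0" using s0 s0p e(1) unfolding s1_def dist_real_def
        by (auto simp: min_def)
      have "\<not> M (fst p) (gam p s1)" using e(2) s1 by auto
      hence a: "S (gam p s1) (fst p)" using pm' s1(1) by auto
      have "S (gam p s1) (gam p s0)" by (rule cl_trans[OF S a s0(3)])
      thus False using gam_strict[OF S p s1(1) s0(1) s1(3)] by simp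
    next
      case True
      hence nM: "\<not> M (gam p s0) (fst p)" using nb by simp
      obtain e where e: "e > 0" "\<forall>s\<in>{0..2}. dist s s0 < e \<longrightarrow> gam p s \<in> {w\<in>ZZ. \<not> M w (fst p)}"
        using nbhd_s[OF gcont gimg open_worse[OF M xZ] s0(1)] nM gs0 by auto
      define s1 where "s1 = s0 + min (e/2) ((2 - s0)/2)"
      have s1: "s1 \<in> {0..2}" "dist s1 s0 < e" "s0 < s1" using s0 s0l e(1) unfolding s1_def dist_real_def
        by (auto simp: min_def field_simps)
      have "\<not> M (gam p s1) (fst p)" using e(2) s1 by auto
      hence a: "S (fst p) (gam p s1)" using pu' s1(1) by auto
      have "S (gam p s0) (gam p s1)" by (rule cl_trans[OF S s0(2) a])
      thus False using gam_strict[OF S p s0(1) s1(1) s1(3)] by simp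
    qed
  qed
  have m1: "(x,z) \<in> Up"
    unfolding Up_def
  proof (intro CollectI conjI ballI)
    show "(x,z) \<in> Dl" by (rule p1(1))
    fix s assume s: "s \<in> {0..2::real}"
    have one: "1 \<in> {0..2::real}" by simp
    show "S (fst (x,z)) (gam (x,z) s) \<or> M (gam (x,z) s) (fst (x,z))"
    proof (cases "s \<le> 1")
      case True
      have "S (gam (x,z) 1) (gam (x,z) s)" by (rule gam_weak[OF S p1(1) s one True])
      hence "S z (gam (x,z) s)" by (simp add: gam_1)
      hence "S x (gam (x,z) s)" by (rule cl_trans[OF S p1(2)])
      thus ?thesis by simp
    next
      case False
      have "M (gam (x,z) s) (gam (x,z) 1)" using gam_weak[OF M p1(1) one s] False by simp
      hence "M (gam (x,z) s) z" by (simp add: gam_1)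
      hence "M (gam (x,z) s) x" by (rule cl_trans[OF M _ p1(4)])
      thus ?thesis by simp
    qed
  qed
  have m2: "(x',z') \<in> Um"
    unfolding Um_def
  proof (intro CollectI conjI ballI)
    show "(x',z') \<in> Dl" by (rule p2(1))
    fix s assume s: "s \<in> {0..2::real}"
    have one: "1 \<in> {0..2::real}" by simp
    show "M (fst (x',z')) (gam (x',z') s) \<or> S (gam (x',z') s) (fst (x',z'))"
    proof (cases "s \<le> 1")
      case True
      have "M (gam (x',z') 1) (gam (x',z') s)" by (rule gam_weak[OF M p2(1) s one True])
      hence "M z' (gam (x',z') s)" by (simp add: gam_1)
      hence "M x' (gam (x',z') s)" by (rule cl_trans[OF M p2(4)])
      thus ?thesis by simp
    next
      case False
      have "S (gam (x',z') s) (gam (x',z') 1)" using gam_weak[OF S p2(1) one s] False by simp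
      hence "S (gam (x',z') s) z'" by (simp add: gam_1)
      hence "S (gam (x',z') s) x'" by (rule cl_trans[OF S _ p2(3)])
      thus ?thesis by simp
    qed
  qed
  have "\<not> connected Dl"
    unfolding connected_closedin
    apply (rule notI, erule notE)
    apply (rule exI[of _ Up], rule exI[of _ Um])
    using cUp cUm cover disj m1 m2 by blast
  thus False using convex_connected[OF Dl_convex] by simp
qed

lemma tot:
  assumes S: "classical S" and M: "classical M" and neq: "S \<noteq> M"
    and sc: "\<And>u v. u \<in> ZZ \<Longrightarrow> v \<in> ZZ \<Longrightarrow> S u v \<Longrightarrow> S v u \<Longrightarrow> M u v \<Longrightarrow> M v u \<Longrightarrow> u = v"
    and x: "x \<in> ZZ" and z: "z \<in> ZZ" and xz: "point_less x z" and Sxz: "S x z" and Mzx: "M z x"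
  shows "pref_prec S M"
proof -
  have lt: "fst x < fst z" "snd x < snd z" using xz unfolding point_less_def by auto
  define g where "g = (\<lambda>t::real. (t, snd x))"
  have gc: "continuous_on {fst x..fst z} g" unfolding g_def by (intro continuous_intros)
  have gi: "g ` {fst x..fst z} \<subseteq> ZZ" unfolding g_def using x by (auto simp: ZZ_iff')
  have gbZ: "g (fst z) \<in> ZZ" using gi lt by auto
  have e1: "S (g (fst x)) z" using Sxz unfolding g_def by simp
  have e2: "S z (g (fst z))" using dom_weak[OF S z gbZ] lt unfolding g_def by simp
  have "\<exists>s\<in>{fst x..fst z}. S (g s) z \<and> S z (g s)"
    by (rule ivt_pref[OF S z _ gc gi]) (use e1 e2 lt in auto)
  then obtain t where t: "t \<in> {fst x..fst z}" "S (g t) z" "S z (g t)" by blast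
  define x1 where "x1 = g t"
  have x1Z: "x1 \<in> ZZ" using gi t(1) unfolding x1_def by auto
  have tl: "t < fst z"
  proof (rule ccontr)
    assume "\<not> t < fst z"
    hence "t = fst z" using t(1) by auto
    have "\<not> S (g (fst z)) z"
      apply (rule dom_strict[OF S z gbZ]) using lt unfolding g_def by (auto simp: prod_eq_iff)
    hence "\<not> S (g t) z" using \<open>t = fst z\<close> by simp
    thus False using t(2) by simp
  qed
  have D1: "(x1, z) \<in> Dl" unfolding Dl_def point_less_def x1_def g_def using x1Z z tl lt
    by (auto simp: x1_def g_def)
  have Mxx1: "M x x1" using dom_weak[OF M x x1Z] t(1) unfolding x1_def g_def by simp
  have Mzx1: "M z x1" by (rule cl_trans[OF M Mzx Mxx1])
  show ?thesis unfolding pref_prec_def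
  proof (intro conjI neq ballI subsetI)
    fix y w assume y: "y \<in> ZZ" and w: "w \<in> box_below y \<inter> {x\<in>ZZ. M x y}"
    have wZ: "w \<in> ZZ" and Mwy: "M w y" using w by (auto simp: box_below_def)
    have wy: "w = y \<or> point_less w y" using w by (auto simp: box_below_def)
    have "S w y"
    proof (cases "w = y")
      case True thus ?thesis using cl_refl[OF S y] by simp
    next
      case False
      hence pl: "point_less w y" using wy by simp
      have lt2: "fst w < fst y" "snd w < snd y" using pl unfolding point_less_def by auto
      show ?thesis
      proof (rule ccontr)
        assume nS: "\<not> S w y"
        have Syw: "S y w" by (rule cl_tot[OF S wZ y nS])
        define h where "h = (\<lambda>l::real. (fst y, l))"
        have hc: "continuous_on {snd w..snd y} h" unfolding h_def by (intro continuous_intros)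
        have hi: "h ` {snd w..snd y} \<subseteq> ZZ" unfolding h_def using y wZ by (auto simp: ZZ_iff')
        have haZ: "h (snd w) \<in> ZZ" using hi lt2 by auto
        have f1: "S w (h (snd w))" using dom_weak[OF S wZ haZ] lt2 unfolding h_def by simp
        have f2: "S (h (snd y)) w" using Syw unfolding h_def by simp
        have "\<exists>s\<in>{snd w..snd y}. S (h s) w \<and> S w (h s)"
          by (rule ivt_pref[OF S wZ _ hc hi]) (use f1 f2 lt2 in auto)
        then obtain l where l: "l \<in> {snd w..snd y}" "S (h l) w" "S w (h l)" by blast
        define y1 where "y1 = h l"
        have y1Z: "y1 \<in> ZZ" using hi l(1) unfolding y1_def by auto
        have ll: "snd w < l"
        proof (rule ccontr)
          assume "\<not> snd w < l"
          hence "l = snd w" using l(1) by auto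
          have "\<not> S (h (snd w)) w"
            apply (rule dom_strict[OF S wZ haZ]) using lt2 unfolding h_def by (auto simp: prod_eq_iff)
          hence "\<not> S (h l) w" using \<open>l = snd w\<close> by simp
          thus False using l(2) by simp
        qed
        have D2: "(w, y1) \<in> Dl" unfolding Dl_def point_less_def using y1Z wZ ll lt2
          by (auto simp: y1_def h_def)
        have Myy1: "M y y1" using dom_weak[OF M y y1Z] l(1) unfolding y1_def h_def by simp
        have Mwy1: "M w y1" by (rule cl_trans[OF M Mwy Myy1])
        show False
          by (rule orient[OF S M sc D1 _ _ Mzx1 D2 _ _ Mwy1])
             (use t l in \<open>simp_all add: x1_def y1_def\<close>)
      qed
    qed
    thus "w \<in> box_below y \<inter> {x\<in>ZZ. S x y}" using w wZ by auto
  qed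
qed

lemma lemP:
  assumes pp: "pref_prec S M" and S: "classical S" and M: "classical M"
    and x: "x \<in> ZZ" and y: "y \<in> ZZ" and xy: "point_less x y" and i: "S x y" "S y x"
  shows "M y x"
proof (rule ccontr)
  assume nM: "\<not> M y x"
  have lt: "fst x < fst y" "snd x < snd y" using xy unfolding point_less_def by auto
  have xU: "x \<in> {u\<in>ZZ. \<not> M y u}" using x nM by simp
  obtain e where e: "e > 0" "\<And>u. u \<in> ZZ \<Longrightarrow> dist u x < e \<Longrightarrow> u \<in> {u\<in>ZZ. \<not> M y u}"
    using ball_in[OF open_better[OF M y] xU] by blast
  define d where "d = min (e/2) ((fst y - fst x)/2)"
  have d: "0 < d" "d < e" "fst x + d < fst y" using e(1) lt unfolding d_def by (auto simp: min_def field_simps)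
  define w where "w = (fst x + d, snd x)"
  have wZ: "w \<in> ZZ" unfolding w_def using x d by (auto simp: ZZ_iff')
  have "dist w x = d" unfolding w_def using d by (cases x) (simp add: dist_Pair_Pair dist_real_def)
  hence "\<not> M y w" using e(2)[OF wZ] d by auto
  hence Mwy: "M w y" by (rule cl_tot[OF M y wZ])
  have "point_less w y" unfolding w_def point_less_def using d lt by simp
  hence "w \<in> box_below y \<inter> {u\<in>ZZ. M u y}" using wZ Mwy unfolding box_below_def by auto
  hence "S w y" using pp y unfolding pref_prec_def by blast
  hence Swx: "S w x" by (rule cl_trans[OF S _ i(2)])
  have "w \<noteq> x" unfolding w_def using d by (cases x) auto
  hence "\<not> S w x" using dom_strict[OF S x wZ] d unfolding w_def by simp
  thus False using Swx by simp
qed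

lemma istop_gen: "istopology (generate_topology G)"
  unfolding istopology_def by (auto intro: generate_topology.intros)

lemma ray_open1:
  assumes "A \<in> D"
  shows "openin (order_top D) {S\<in>D. pref_prec A S}"
proof -
  let ?G = "({{R\<in>D. pref_prec R A} | A. A \<in> D} \<union> {{R\<in>D. pref_prec A R} | A. A \<in> D})"
  have "generate_topology ?G {S\<in>D. pref_prec A S}"
    using assms by (intro generate_topology.Basis) blast
  hence "openin (topology (generate_topology ?G)) {S\<in>D. pref_prec A S}"
    by (simp add: istop_gen)
  thus ?thesis unfolding order_top_def
    by (metis (no_types, lifting) inf.absorb_iff2 mem_Collect_eq openin_subtopology_Int2 subsetI)
qed

lemma ray_open2:
  assumes "A \<in> D"
  shows "openin (order_top D) {S\<in>D. pref_prec S A}"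
proof -
  let ?G = "({{R\<in>D. pref_prec R A} | A. A \<in> D} \<union> {{R\<in>D. pref_prec A R} | A. A \<in> D})"
  have "generate_topology ?G {S\<in>D. pref_prec S A}"
    using assms by (intro generate_topology.Basis) blast
  hence "openin (topology (generate_topology ?G)) {S\<in>D. pref_prec S A}"
    by (simp add: istop_gen)
  thus ?thesis unfolding order_top_def
    by (metis (no_types, lifting) inf.absorb_iff2 mem_Collect_eq openin_subtopology_Int2 subsetI)
qed


lemma rich_D:
  assumes D: "rich_single_crossing D" and "x \<in> ZZ" "y \<in> ZZ" "point_less x y"
  obtains A where "A \<in> D" "indiff A x y"
proof -
  have "\<forall>x\<in>ZZ. \<forall>y\<in>ZZ. point_less x y \<longrightarrow> (\<exists>R\<in>D. indiff R x y)"
    using D unfolding rich_single_crossing_def by (elim conjE)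
  hence "\<exists>R\<in>D. indiff R x y" using assms(2-4) by simp
  thus ?thesis using that by blast
qed

lemma cl_D: "rich_single_crossing D \<Longrightarrow> A \<in> D \<Longrightarrow> classical A"
  unfolding rich_single_crossing_def by (elim conjE) simp

lemma sc_D:
  assumes D: "rich_single_crossing D" and A: "A \<in> D" and B: "B \<in> D" and ne: "A \<noteq> B"
  shows "\<And>u v. u \<in> ZZ \<Longrightarrow> v \<in> ZZ \<Longrightarrow> A u v \<Longrightarrow> A v u \<Longrightarrow> B u v \<Longrightarrow> B v u \<Longrightarrow> u = v"
proof -
  fix u v assume h: "u \<in> ZZ" "v \<in> ZZ" "A u v" "A v u" "B u v" "B v u"
  have "\<forall>R'\<in>D. \<forall>R''\<in>D. R' \<noteq> R'' \<longrightarrow> single_crossing R' R''"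
    using D unfolding rich_single_crossing_def by (elim conjE)
  hence sc: "single_crossing A B" using A B ne by blast
  have cA: "classical A" and cB: "classical B" using cl_D[OF D A] cl_D[OF D B] by auto
  have "u \<in> indiff_set A v \<inter> indiff_set B v" using h unfolding indiff_set_def indiff_def by auto
  moreover have "v \<in> indiff_set A v \<inter> indiff_set B v"
    using h cl_refl[OF cA h(2)] cl_refl[OF cB h(2)] unfolding indiff_set_def indiff_def by auto
  ultimately show "u = v" using sc h(2) unfolding single_crossing_def by blast
qed

lemma tot_D:
  assumes D: "rich_single_crossing D" and S: "S \<in> D" and M: "M \<in> D" and ne: "S \<noteq> M"
    and "x \<in> ZZ" "z \<in> ZZ" "point_less x z" "S x z" "M z x"
  shows "pref_prec S M"
proof -
  have cS: "classical S" and cM: "classical M" using cl_D[OF D S] cl_D[OF D M] by auto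
  show ?thesis by (rule tot[OF cS cM ne sc_D[OF D S M ne] assms(5-9)])
qed

lemma EA:
  assumes D: "rich_single_crossing D" and R: "R \<in> D" and z1: "z1 \<in> ZZ" and z2: "z2 \<in> ZZ"
    and c1: "fst z1 \<le> fst z2" and c2: "snd z1 < snd z2" and nR: "\<not> R z1 z2"
  shows "\<exists>A\<in>D. pref_prec A R \<and> (\<exists>N1 N2. openin (top_of_set ZZ) N1 \<and> z1 \<in> N1 \<and>
            openin (top_of_set ZZ) N2 \<and> z2 \<in> N2 \<and> (\<forall>x\<in>N1. \<forall>y\<in>N2. \<not> A x y))"
proof -
  have cR: "classical R" by (rule cl_D[OF D R])
  have "z1 \<in> {w\<in>ZZ. \<not> R w z2}" using z1 nR by simp
  then obtain e1 where e1: "e1 > 0" "\<And>u. u \<in> ZZ \<Longrightarrow> dist u z1 < e1 \<Longrightarrow> u \<in> {w\<in>ZZ. \<not> R w z2}"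
    by (rule ball_in[OF open_worse[OF cR z2]]; blast)
  define ep where "ep = min (e1/2) ((snd z2 - snd z1)/2)"
  have ep: "0 < ep" "ep < e1" "snd z1 + ep < snd z2" using e1(1) c2 unfolding ep_def by (auto simp: min_def field_simps)
  define a1 where "a1 = (fst z1, snd z1 + ep)"
  have a1Z: "a1 \<in> ZZ" unfolding a1_def using z1 z2 ep by (auto simp: ZZ_iff')
  have "dist a1 z1 = ep" unfolding a1_def using ep by (cases z1) (simp add: dist_Pair_Pair dist_real_def)
  hence na1: "\<not> R a1 z2" using e1(2)[OF a1Z] ep by auto
  have "z2 \<in> {w\<in>ZZ. \<not> R a1 w}" using z2 na1 by simp
  then obtain e2 where e2: "e2 > 0" "\<And>u. u \<in> ZZ \<Longrightarrow> dist u z2 < e2 \<Longrightarrow> u \<in> {w\<in>ZZ. \<not> R a1 w}"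
    by (rule ball_in[OF open_better[OF cR a1Z]]; blast)
  define a2 where "a2 = (fst z2 + e2/2, snd z2)"
  have a2Z: "a2 \<in> ZZ" unfolding a2_def using z2 e2 by (auto simp: ZZ_iff')
  have "dist a2 z2 = e2/2" unfolding a2_def using e2 by (cases z2) (simp add: dist_Pair_Pair dist_real_def)
  hence na12: "\<not> R a1 a2" using e2(2)[OF a2Z] e2(1) by auto
  have pl: "point_less a1 a2" unfolding a1_def a2_def point_less_def using c1 ep e2(1) by simp
  obtain A where A: "A \<in> D" "indiff A a1 a2"
    using rich_D[OF D a1Z a2Z pl] by blast
  have cA: "classical A" by (rule cl_D[OF D A(1)])
  have Aa: "A a1 a2" "A a2 a1" using A(2) unfolding indiff_def by auto
  have ne: "A \<noteq> R"
  proof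
    assume "A = R" hence "R a1 a2" using Aa(1) by simp
    thus False using na12 by simp
  qed
  have Ra: "R a2 a1" by (rule cl_tot[OF cR a1Z a2Z na12])
  have pp: "pref_prec A R" by (rule tot_D[OF D A(1) R ne a1Z a2Z pl Aa(1) Ra])
  have m1: "z1 \<in> {x\<in>ZZ. \<not> A x a1}"
  proof -
    have f: "fst a1 \<le> fst z1" "snd z1 < snd a1" unfolding a1_def using ep by simp_all
    hence "a1 \<noteq> z1" by auto
    hence "\<not> A z1 a1" using dom_strict[OF cA a1Z z1] f by simp
    thus ?thesis using z1 by simp
  qed
  have m2: "z2 \<in> {y\<in>ZZ. \<not> A a2 y}"
  proof -
    have f: "fst z2 < fst a2" "snd a2 \<le> snd z2" unfolding a2_def using e2 by simp_all
    hence "z2 \<noteq> a2" by auto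
    hence "\<not> A a2 z2" using dom_strict[OF cA z2 a2Z] f by simp
    thus ?thesis using z2 by simp
  qed
  have prp: "\<forall>x\<in>{x\<in>ZZ. \<not> A x a1}. \<forall>y\<in>{y\<in>ZZ. \<not> A a2 y}. \<not> A x y"
  proof (intro ballI notI)
    fix x y assume x: "x \<in> {x\<in>ZZ. \<not> A x a1}" and y: "y \<in> {y\<in>ZZ. \<not> A a2 y}" and Axy: "A x y"
    have yZ: "y \<in> ZZ" and na: "\<not> A a2 y" using y by auto
    have "A y a2" by (rule cl_tot[OF cA a2Z yZ na])
    hence "A x a2" by (rule cl_trans[OF cA Axy])
    hence "A x a1" by (rule cl_trans[OF cA _ Aa(2)])
    thus False using x by simp
  qed
  have big: "openin (top_of_set ZZ) {x\<in>ZZ. \<not> A x a1} \<and> z1 \<in> {x\<in>ZZ. \<not> A x a1} \<and>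
     openin (top_of_set ZZ) {y\<in>ZZ. \<not> A a2 y} \<and> z2 \<in> {y\<in>ZZ. \<not> A a2 y} \<and>
     (\<forall>x\<in>{x\<in>ZZ. \<not> A x a1}. \<forall>y\<in>{y\<in>ZZ. \<not> A a2 y}. \<not> A x y)"
    by (intro conjI open_worse[OF cA a1Z] open_better[OF cA a2Z] m1 m2 prp)
  show ?thesis
    apply (rule bexI[of _ A], rule conjI[OF pp])
    apply (rule exI, rule exI, rule big)
    by (rule A(1))
qed

lemma EB:
  assumes D: "rich_single_crossing D" and R: "R \<in> D" and z1: "z1 \<in> ZZ" and z2: "z2 \<in> ZZ"
    and c1: "fst z2 < fst z1" and c2: "snd z2 \<le> snd z1" and nR: "\<not> R z1 z2"
  shows "\<exists>B\<in>D. pref_prec R B \<and> (\<exists>N1 N2. openin (top_of_set ZZ) N1 \<and> z1 \<in> N1 \<and>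
            openin (top_of_set ZZ) N2 \<and> z2 \<in> N2 \<and> (\<forall>x\<in>N1. \<forall>y\<in>N2. \<not> B x y))"
proof -
  have cR: "classical R" by (rule cl_D[OF D R])
  have q: "0 \<le> snd z1" "snd z1 \<le> 1" "0 \<le> snd z2" "snd z2 \<le> 1" "0 \<le> fst z2" using z1 z2 by (auto simp: ZZ_iff')
  have "z1 \<in> {w\<in>ZZ. \<not> R w z2}" using z1 nR by simp
  then obtain e1 where e1: "e1 > 0" "\<And>u. u \<in> ZZ \<Longrightarrow> dist u z1 < e1 \<Longrightarrow> u \<in> {w\<in>ZZ. \<not> R w z2}"
    by (rule ball_in[OF open_worse[OF cR z2]]; blast)
  define d1 where "d1 = min (e1/4) ((fst z1 - fst z2)/4)"
  define p1 where "p1 = min (e1/4) (1/2)"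
  have d1: "0 < d1" "d1 \<le> e1/4" "d1 \<le> (fst z1 - fst z2)/4" using e1(1) c1 unfolding d1_def by (auto simp: min_def field_simps)
  have p1: "0 < p1" "p1 \<le> e1/4" "p1 \<le> 1/2" using e1(1) unfolding p1_def by auto
  have pq1: "0 \<le> p1 * (1 - snd z1)" "p1 * (1 - snd z1) \<le> 1 - snd z1" "p1 * (1 - snd z1) \<le> e1/4"
  proof -
    show "0 \<le> p1 * (1 - snd z1)" using p1 q by simp
    show "p1 * (1 - snd z1) \<le> 1 - snd z1" using p1 q by (intro mult_left_le_one_le) auto
    have "p1 * (1 - snd z1) \<le> p1" using p1 q by (intro mult_right_le_one_le) auto
    thus "p1 * (1 - snd z1) \<le> e1/4" using p1 by linarith
  qed
  define b1 where "b1 = (fst z1 - d1, snd z1 + p1 * (1 - snd z1))"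
  have b1Z: "b1 \<in> ZZ" unfolding b1_def using q d1 c1 pq1 by (auto simp: ZZ_iff')
  have "dist b1 z1 \<le> \<bar>fst z1 - d1 - fst z1\<bar> + \<bar>snd z1 + p1 * (1 - snd z1) - snd z1\<bar>"
    unfolding b1_def using dist_pair_le[of "fst z1 - d1" "snd z1 + p1 * (1 - snd z1)" "fst z1" "snd z1"] by simp
  also have "\<dots> \<le> e1/2" using d1 pq1 by auto
  finally have "dist b1 z1 < e1" using e1(1) by linarith
  hence nb1: "\<not> R b1 z2" using e1(2)[OF b1Z] by auto
  have "z2 \<in> {w\<in>ZZ. \<not> R b1 w}" using z2 nb1 by simp
  then obtain e2 where e2: "e2 > 0" "\<And>u. u \<in> ZZ \<Longrightarrow> dist u z2 < e2 \<Longrightarrow> u \<in> {w\<in>ZZ. \<not> R b1 w}"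
    by (rule ball_in[OF open_better[OF cR b1Z]]; blast)
  define d2 where "d2 = min (e2/4) ((fst z1 - fst z2)/4)"
  define p2 where "p2 = min (e2/4) (1/2)"
  have d2: "0 < d2" "d2 \<le> e2/4" "d2 \<le> (fst z1 - fst z2)/4" using e2(1) c1 unfolding d2_def by (auto simp: min_def field_simps)
  have p2: "0 < p2" "p2 \<le> e2/4" "p2 \<le> 1/2" using e2(1) unfolding p2_def by auto
  have pq2: "0 \<le> p2 * snd z2" "p2 * snd z2 \<le> snd z2" "p2 * snd z2 \<le> e2/4"
  proof -
    show "0 \<le> p2 * snd z2" using p2 q by simp
    show "p2 * snd z2 \<le> snd z2" using p2 q by (intro mult_left_le_one_le) auto
    have "p2 * snd z2 \<le> p2" using p2 q by (intro mult_right_le_one_le) auto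
    thus "p2 * snd z2 \<le> e2/4" using p2 by linarith
  qed
  define b2 where "b2 = (fst z2 + d2, snd z2 - p2 * snd z2)"
  have b2Z: "b2 \<in> ZZ" unfolding b2_def using q d2 pq2 by (auto simp: ZZ_iff')
  have "dist b2 z2 \<le> \<bar>fst z2 + d2 - fst z2\<bar> + \<bar>snd z2 - p2 * snd z2 - snd z2\<bar>"
    unfolding b2_def using dist_pair_le[of "fst z2 + d2" "snd z2 - p2 * snd z2" "fst z2" "snd z2"] by simp
  also have "\<dots> \<le> e2/2" using d2 pq2 by auto
  finally have "dist b2 z2 < e2" using e2(1) by linarith
  hence nb12: "\<not> R b1 b2" using e2(2)[OF b2Z] by auto
  have qlt: "snd z2 - p2 * snd z2 < snd z1 + p1 * (1 - snd z1)"
  proof (cases "snd z2 < snd z1")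
    case True thus ?thesis using pq1 pq2 by linarith
  next
    case False
    hence eq: "snd z2 = snd z1" using c2 by simp
    show ?thesis
    proof (cases "snd z1 < 1")
      case True
      hence "0 < p1 * (1 - snd z1)" using p1 by simp
      thus ?thesis using pq2 eq by linarith
    next
      case False
      hence "snd z2 = 1" "snd z1 = 1" using eq q by simp_all
      thus ?thesis using p2 by simp
    qed
  qed
  have pl: "point_less b2 b1" unfolding b1_def b2_def point_less_def using qlt d1 d2 c1 by simp
  obtain B where B: "B \<in> D" "indiff B b2 b1"
    using rich_D[OF D b2Z b1Z pl] by blast
  have cB: "classical B" by (rule cl_D[OF D B(1)])
  have Bb: "B b2 b1" "B b1 b2" using B(2) unfolding indiff_def by auto
  have ne: "R \<noteq> B"
  proof
    assume "R = B" hence "R b1 b2" using Bb(2) by simp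
    thus False using nb12 by simp
  qed
  have Rb: "R b2 b1" by (rule cl_tot[OF cR b1Z b2Z nb12])
  have pp: "pref_prec R B" by (rule tot_D[OF D R B(1) ne b2Z b1Z pl Rb Bb(2)])
  have m1: "z1 \<in> {x\<in>ZZ. \<not> B x b1}"
  proof -
    have f: "fst b1 < fst z1" "snd z1 \<le> snd b1" unfolding b1_def using d1 pq1 by simp_all
    hence "b1 \<noteq> z1" by auto
    hence "\<not> B z1 b1" using dom_strict[OF cB b1Z z1] f by simp
    thus ?thesis using z1 by simp
  qed
  have m2: "z2 \<in> {y\<in>ZZ. \<not> B b2 y}"
  proof -
    have f: "fst z2 < fst b2" "snd b2 \<le> snd z2" unfolding b2_def using d2 pq2 by simp_all
    hence "z2 \<noteq> b2" by auto
    hence "\<not> B b2 z2" using dom_strict[OF cB z2 b2Z] f by simp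
    thus ?thesis using z2 by simp
  qed
  have prp: "\<forall>x\<in>{x\<in>ZZ. \<not> B x b1}. \<forall>y\<in>{y\<in>ZZ. \<not> B b2 y}. \<not> B x y"
  proof (intro ballI notI)
    fix x y assume x: "x \<in> {x\<in>ZZ. \<not> B x b1}" and y: "y \<in> {y\<in>ZZ. \<not> B b2 y}" and Bxy: "B x y"
    have yZ: "y \<in> ZZ" and na: "\<not> B b2 y" using y by auto
    have "B y b2" by (rule cl_tot[OF cB b2Z yZ na])
    hence "B x b2" by (rule cl_trans[OF cB Bxy])
    hence "B x b1" by (rule cl_trans[OF cB _ Bb(1)])
    thus False using x by simp
  qed
  have big: "openin (top_of_set ZZ) {x\<in>ZZ. \<not> B x b1} \<and> z1 \<in> {x\<in>ZZ. \<not> B x b1} \<and>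
     openin (top_of_set ZZ) {y\<in>ZZ. \<not> B b2 y} \<and> z2 \<in> {y\<in>ZZ. \<not> B b2 y} \<and>
     (\<forall>x\<in>{x\<in>ZZ. \<not> B x b1}. \<forall>y\<in>{y\<in>ZZ. \<not> B b2 y}. \<not> B x y)"
    by (intro conjI open_worse[OF cB b1Z] open_better[OF cB b2Z] m1 m2 prp)
  show ?thesis
    apply (rule bexI[of _ B], rule conjI[OF pp])
    apply (rule exI, rule exI, rule big)
    by (rule B(1))
qed

lemma ev_gt:
  assumes f: "f \<longlonglongrightarrow> a" and g: "g \<longlonglongrightarrow> b" and ab: "(a::real) > b"
  shows "eventually (\<lambda>n. f n > g n) sequentially"
proof -
  have "(\<lambda>n. f n - g n) \<longlonglongrightarrow> a - b" by (intro tendsto_diff f g)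
  hence "eventually (\<lambda>n. f n - g n > 0) sequentially" using ab by (intro order_tendstoD(1)) auto
  thus ?thesis by eventually_elim simp
qed

lemma main_one:
  fixes D :: "pref set" and Rs :: "nat \<Rightarrow> pref" and R :: pref
    and z1s z2s :: "nat \<Rightarrow> point" and z1 z2 :: point
  assumes D: "rich_single_crossing D"
    and Rs: "\<And>n. Rs n \<in> D" and R: "R \<in> D"
    and lim: "limitin (order_top D) Rs R sequentially"
    and z1s: "\<And>n. z1s n \<in> ZZ" and z2s: "\<And>n. z2s n \<in> ZZ"
    and t1: "z1s \<longlonglongrightarrow> z1" and t2: "z2s \<longlonglongrightarrow> z2"
    and ind: "\<And>n. indiff (Rs n) (z1s n) (z2s n)"
    and nR: "\<not> R z1 z2"
  shows False
proof -
  have cR: "classical R" by (rule cl_D[OF D R])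
  have cRs: "\<And>n. classical (Rs n)" by (rule cl_D[OF D Rs])
  have z1: "z1 \<in> ZZ" by (rule closed_sequentially[OF ZZ_closed z1s t1])
  have z2: "z2 \<in> ZZ" by (rule closed_sequentially[OF ZZ_closed z2s t2])
  have ne: "z1 \<noteq> z2"
  proof
    assume "z1 = z2" thus False using nR cl_refl[OF cR z2] by simp
  qed
  have tf1: "(\<lambda>n. fst (z1s n)) \<longlonglongrightarrow> fst z1" by (intro tendsto_fst t1)
  have tf2: "(\<lambda>n. fst (z2s n)) \<longlonglongrightarrow> fst z2" by (intro tendsto_fst t2)
  have ts1: "(\<lambda>n. snd (z1s n)) \<longlonglongrightarrow> snd z1" by (intro tendsto_snd t1)
  have ts2: "(\<lambda>n. snd (z2s n)) \<longlonglongrightarrow> snd z2" by (intro tendsto_snd t2)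
  have e0: "eventually (\<lambda>n. z1s n \<noteq> z2s n) sequentially"
  proof -
    have "(\<lambda>n. dist (z1s n) (z2s n)) \<longlonglongrightarrow> dist z1 z2" by (intro tendsto_dist t1 t2)
    hence "eventually (\<lambda>n. dist (z1s n) (z2s n) > 0) sequentially"
      using ne by (intro order_tendstoD(1)) auto
    thus ?thesis by eventually_elim auto
  qed
  have e1: "eventually (\<lambda>n. \<not> point_less (z1s n) (z2s n)) sequentially"
  proof (cases "fst z1 \<le> fst z2 \<and> snd z1 \<le> snd z2")
    case False
    hence "fst z1 > fst z2 \<or> snd z1 > snd z2" by auto
    thus ?thesis
    proof
      assume "fst z1 > fst z2"
      hence "eventually (\<lambda>n. fst (z1s n) > fst (z2s n)) sequentially" by (rule ev_gt[OF tf1 tf2])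
      thus ?thesis by eventually_elim (auto simp: point_less_def)
    next
      assume "snd z1 > snd z2"
      hence "eventually (\<lambda>n. snd (z1s n) > snd (z2s n)) sequentially" by (rule ev_gt[OF ts1 ts2])
      thus ?thesis by eventually_elim (auto simp: point_less_def)
    qed
  next
    case True
    have c2: "snd z1 < snd z2"
    proof (rule ccontr)
      assume "\<not> snd z1 < snd z2"
      hence "snd z2 \<le> snd z1" by simp
      hence "R z1 z2" using dom_weak[OF cR z1 z2] True by simp
      thus False using nR by simp
    qed
    obtain A N1 N2 where A: "A \<in> D" "pref_prec A R" and N: "openin (top_of_set ZZ) N1" "z1 \<in> N1"
        "openin (top_of_set ZZ) N2" "z2 \<in> N2" and NP: "\<forall>x\<in>N1. \<forall>y\<in>N2. \<not> A x y"
      using EA[OF D R z1 z2 conjunct1[OF True] c2 nR] by blast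
    have "eventually (\<lambda>n. Rs n \<in> {S\<in>D. pref_prec A S}) sequentially"
      by (rule limitinD[OF lim ray_open1[OF A(1)]]) (use R A(2) in simp)
    moreover have "eventually (\<lambda>n. z1s n \<in> N1) sequentially" by (rule ev_in[OF N(1,2) t1 z1s])
    moreover have "eventually (\<lambda>n. z2s n \<in> N2) sequentially" by (rule ev_in[OF N(3,4) t2 z2s])
    ultimately show ?thesis
    proof eventually_elim
      case (elim n)
      show ?case
      proof
        assume pl: "point_less (z1s n) (z2s n)"
        have "Rs n (z1s n) (z2s n)" using ind[of n] unfolding indiff_def by simp
        hence "z1s n \<in> box_below (z2s n) \<inter> {x\<in>ZZ. Rs n x (z2s n)}"
          using pl z1s[of n] unfolding box_below_def by simp
        hence "A (z1s n) (z2s n)" using elim(1) z2s[of n] unfolding pref_prec_def by blast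
        thus False using NP elim(2,3) by blast
      qed
    qed
  qed
  have e2: "eventually (\<lambda>n. \<not> point_less (z2s n) (z1s n)) sequentially"
  proof (cases "fst z2 \<le> fst z1 \<and> snd z2 \<le> snd z1")
    case False
    hence "fst z2 > fst z1 \<or> snd z2 > snd z1" by auto
    thus ?thesis
    proof
      assume "fst z2 > fst z1"
      hence "eventually (\<lambda>n. fst (z2s n) > fst (z1s n)) sequentially" by (rule ev_gt[OF tf2 tf1])
      thus ?thesis by eventually_elim (auto simp: point_less_def)
    next
      assume "snd z2 > snd z1"
      hence "eventually (\<lambda>n. snd (z2s n) > snd (z1s n)) sequentially" by (rule ev_gt[OF ts2 ts1])
      thus ?thesis by eventually_elim (auto simp: point_less_def)
    qed
  next
    case True
    have c1: "fst z2 < fst z1"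
    proof (rule ccontr)
      assume "\<not> fst z2 < fst z1"
      hence "fst z1 \<le> fst z2" by simp
      hence "R z1 z2" using dom_weak[OF cR z1 z2] True by simp
      thus False using nR by simp
    qed
    obtain B N1 N2 where B: "B \<in> D" "pref_prec R B" and N: "openin (top_of_set ZZ) N1" "z1 \<in> N1"
        "openin (top_of_set ZZ) N2" "z2 \<in> N2" and NP: "\<forall>x\<in>N1. \<forall>y\<in>N2. \<not> B x y"
      using EB[OF D R z1 z2 c1 conjunct2[OF True] nR] by blast
    have cB: "classical B" by (rule cl_D[OF D B(1)])
    have "eventually (\<lambda>n. Rs n \<in> {S\<in>D. pref_prec S B}) sequentially"
      by (rule limitinD[OF lim ray_open2[OF B(1)]]) (use R B(2) in simp)
    moreover have "eventually (\<lambda>n. z1s n \<in> N1) sequentially" by (rule ev_in[OF N(1,2) t1 z1s])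
    moreover have "eventually (\<lambda>n. z2s n \<in> N2) sequentially" by (rule ev_in[OF N(3,4) t2 z2s])
    ultimately show ?thesis
    proof eventually_elim
      case (elim n)
      show ?case
      proof
        assume pl: "point_less (z2s n) (z1s n)"
        have pp: "pref_prec (Rs n) B" using elim(1) by simp
        have i1: "Rs n (z2s n) (z1s n)" "Rs n (z1s n) (z2s n)" using ind[of n] unfolding indiff_def by simp_all
        have "B (z1s n) (z2s n)" by (rule lemP[OF pp cRs cB z2s z1s pl i1])
        thus False using NP elim(2,3) by blast
      qed
    qed
  qed
  have "eventually (\<lambda>n. False) sequentially"
    using e0 e1 e2
  proof eventually_elim
    case (elim n)
    define w1 where "w1 = z1s n"
    define w2 where "w2 = z2s n"
    have w: "w1 \<in> ZZ" "w2 \<in> ZZ" "w1 \<noteq> w2" "\<not> point_less w1 w2" "\<not> point_less w2 w1"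
      using elim z1s z2s unfolding w1_def w2_def by auto
    have i: "Rs n w1 w2" "Rs n w2 w1" using ind[of n] unfolding indiff_def w1_def w2_def by simp_all
    have "(fst w1 \<le> fst w2 \<and> snd w2 \<le> snd w1) \<or> (fst w2 \<le> fst w1 \<and> snd w1 \<le> snd w2)"
      using w(4,5) unfolding point_less_def by linarith
    thus False
    proof
      assume h: "fst w1 \<le> fst w2 \<and> snd w2 \<le> snd w1"
      have "\<not> Rs n w2 w1" using dom_strict[OF cRs w(1,2)] h w(3) by simp
      thus False using i by simp
    next
      assume h: "fst w2 \<le> fst w1 \<and> snd w1 \<le> snd w2"
      have "\<not> Rs n w1 w2" using dom_strict[OF cRs w(2,1)] h w(3) by simp
      thus False using i by simp
    qed
  qed
  thus False by simp
qed

theorem mainTheorem3: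
  fixes D :: "pref set" and Rs :: "nat \<Rightarrow> pref" and R :: pref
    and z1s z2s :: "nat \<Rightarrow> point" and z1 z2 :: point
  assumes "rich_single_crossing D"
    and "\<And>n. Rs n \<in> D" and "R \<in> D"
    and "limitin (order_top D) Rs R sequentially"
    and "\<And>n. z1s n \<in> ZZ" and "\<And>n. z2s n \<in> ZZ"
    and "z1s \<longlonglongrightarrow> z1" and "z2s \<longlonglongrightarrow> z2"
    and "\<And>n. indiff (Rs n) (z1s n) (z2s n)"
  shows "indiff R z1 z2"
proof (rule ccontr)
  assume "\<not> indiff R z1 z2"
  hence "\<not> R z1 z2 \<or> \<not> R z2 z1" unfolding indiff_def by simp
  thus False
  proof
    assume "\<not> R z1 z2"
    thus False by (rule main_one[OF assms])
  next
    assume n: "\<not> R z2 z1"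
    have ind': "\<And>n. indiff (Rs n) (z2s n) (z1s n)" using assms(9) unfolding indiff_def by simp
    show False by (rule main_one[OF assms(1-4) assms(6) assms(5) assms(8) assms(7) ind' n])
  qed
qed

end
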